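(* Let $\Delta t>0$, $t_n=n\Delta t$, and let $v_h^0\in W_h$, $k_h^0$ be given. Suppose $v_h^{n+1}\in W_h$, $q_h^{n+1}\in Q_h$, $k_h^{n+1}\in\mathbb{R}$, $n=0,\dots,N-1$, satisfy for all $w_h\in W_h$, $p_h\in Q_h$: \[ \Big(\frac{v_h^{n+1}-v_h^n}{\Delta t},w_h\Big)+(\nu+\mu\tau k_h^n)(\nabla v_h^{n+1},\nabla w_h)+b(v_h^n,v_h^{n+1},w_h)-(\nabla\cdot w_h,q_h^{n+1})=(f^{n+1},w_h), \] \[ (\nabla\cdot v_h^{n+1},p_h)=0,\qquad \frac{k_h^{n+1}-k_h^n}{\Delta t}+\frac{\sqrt2}{2}\tau^{-1}k_h^{n+1}=\frac{1}{|\Omega|}\int_\Omega\mu\tau k_h^n|\nabla v_h^{n+1}|^2dx . \] Then, with a constant $C$ independent of $\Delta t$ and $N$, \[ \|v_h^N\|^2+2|\Omega|k_h^N+\Delta t\sum_{n=0}^{N-1}\Big(\nu\|\nabla v_h^{n+1}\|^2+\sqrt2\tau^{-1}|\Omega|k_h^{n+1}\Big)+\sum_{n=0}^{N-1}\|v_h^{n+1}-v_h^n\|^2\le\sum_{n=0}^{N-1}C\Delta t\|f^{n+1}\|^2+\|v_h^0\|^2+2|\Omega|k_h^0 . \]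
   Context: $\Omega\subset\mathbb{R}^d$ ($d=2,3$) is a bounded domain with measure $|\Omega|$; $(\cdot,\cdot)$, $\|\cdot\|$ are the $L^2(\Omega)$ inner product and norm; $\nu,\mu,\tau>0$ are constants; $f^{n+1}=f(\cdot,t_{n+1})$. $W_h\subset H_0^1(\Omega)^d$ and $Q_h\subset L_0^2(\Omega)$ are continuous piecewise polynomial finite element spaces of degree $r\ge2$ and $r-1$ on a regular quasi-uniform triangulation, satisfying the discrete inf-sup condition. The trilinear form is $b(u,v,w)=\tfrac12((u\cdot\nabla)v,w)-\tfrac12((u\cdot\nabla)w,v)$. *)

theory Defs
  imports "HOL-Analysis.Analysis"
begin

section \<open>Differential operators (pointwise, a.e. meaningful for piecewise polynomials)\<close>

definition pd :: "(real^'d \<Rightarrow> real) \<Rightarrow> 'd \<Rightarrow> real^'d \<Rightarrow> real" where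
  "pd g j x = deriv (\<lambda>s. g (x + s *\<^sub>R axis j 1)) 0"

definition gradsq :: "(real^'d \<Rightarrow> real^'d) \<Rightarrow> real^'d \<Rightarrow> real" where
  "gradsq v x = (\<Sum>i\<in>UNIV. \<Sum>j\<in>UNIV. (pd (\<lambda>y. v y $ i) j x)^2)"

definition divg :: "(real^'d \<Rightarrow> real^'d) \<Rightarrow> real^'d \<Rightarrow> real" where
  "divg w x = (\<Sum>i\<in>UNIV. pd (\<lambda>y. w y $ i) i x)"

definition convec :: "(real^'d \<Rightarrow> real^'d) \<Rightarrow> (real^'d \<Rightarrow> real^'d) \<Rightarrow> real^'d \<Rightarrow> real^'d" where
  "convec u v x = (\<chi> i. \<Sum>j\<in>UNIV. u x $ j * pd (\<lambda>y. v y $ i) j x)"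

definition L2ip :: "(real^'d) set \<Rightarrow> (real^'d \<Rightarrow> real^'d) \<Rightarrow> (real^'d \<Rightarrow> real^'d) \<Rightarrow> real" where
  "L2ip \<Omega> v w = (LINT x:\<Omega>|lebesgue. v x \<bullet> w x)"

definition L2ips :: "(real^'d) set \<Rightarrow> (real^'d \<Rightarrow> real) \<Rightarrow> (real^'d \<Rightarrow> real) \<Rightarrow> real" where
  "L2ips \<Omega> p q = (LINT x:\<Omega>|lebesgue. p x * q x)"

definition gradip :: "(real^'d) set \<Rightarrow> (real^'d \<Rightarrow> real^'d) \<Rightarrow> (real^'d \<Rightarrow> real^'d) \<Rightarrow> real" where
  "gradip \<Omega> v w = (LINT x:\<Omega>|lebesgue.
      \<Sum>i\<in>UNIV. \<Sum>j\<in>UNIV. pd (\<lambda>y. v y $ i) j x * pd (\<lambda>y. w y $ i) j x)"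

definition btri :: "(real^'d) set \<Rightarrow> (real^'d \<Rightarrow> real^'d) \<Rightarrow> (real^'d \<Rightarrow> real^'d) \<Rightarrow> (real^'d \<Rightarrow> real^'d) \<Rightarrow> real" where
  "btri \<Omega> u v w = 1/2 * L2ip \<Omega> (convec u v) w - 1/2 * L2ip \<Omega> (convec u w) v"

definition L2field :: "(real^'d) set \<Rightarrow> (real^'d \<Rightarrow> real^'d) \<Rightarrow> bool" where
  "L2field \<Omega> g \<longleftrightarrow> g \<in> borel_measurable lebesgue \<and> set_integrable lebesgue \<Omega> (\<lambda>x. (norm (g x))^2)"

definition triangulation :: "(real^'d) set \<Rightarrow> (real^'d) set set \<Rightarrow> bool" where
  "triangulation \<Omega> T \<longleftrightarrow> finite T \<and>
     (\<forall>S\<in>T. finite S \<and> card S = CARD('d) + 1 \<and> \<not> affine_dependent S) \<and>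
     (\<forall>S1\<in>T. \<forall>S2\<in>T. convex hull S1 \<inter> convex hull S2 = convex hull (S1 \<inter> S2)) \<and>
     \<Union>{convex hull S | S. S \<in> T} = closure \<Omega>"

definition poly_on :: "(real^'d) set \<Rightarrow> nat \<Rightarrow> (real^'d \<Rightarrow> real) \<Rightarrow> bool" where
  "poly_on K r p \<longleftrightarrow> (\<exists>c :: ('d \<Rightarrow> nat) \<Rightarrow> real. \<forall>x\<in>K.
      p x = (\<Sum>\<alpha>\<in>{\<alpha>::'d \<Rightarrow> nat. sum \<alpha> UNIV \<le> r}. c \<alpha> * (\<Prod>i\<in>UNIV. (x $ i) ^ (\<alpha> i))))"

text \<open>W_h: continuous piecewise polynomial vector fields of degree r, vanishing outside Omega
  (hence on the boundary): a conforming subspace of H_0^1(Omega)^d.\<close>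
definition Wh :: "(real^'d) set \<Rightarrow> (real^'d) set set \<Rightarrow> nat \<Rightarrow> (real^'d \<Rightarrow> real^'d) set" where
  "Wh \<Omega> T r = {v. continuous_on UNIV v \<and> (\<forall>x. x \<notin> \<Omega> \<longrightarrow> v x = 0) \<and>
      (\<forall>S\<in>T. \<forall>i. poly_on (convex hull S) r (\<lambda>x. v x $ i))}"

definition Qh :: "(real^'d) set \<Rightarrow> (real^'d) set set \<Rightarrow> nat \<Rightarrow> (real^'d \<Rightarrow> real) set" where
  "Qh \<Omega> T r = {q. continuous_on (closure \<Omega>) q \<and>
      (\<forall>S\<in>T. poly_on (convex hull S) (r - 1) q) \<and> (LINT x:\<Omega>|lebesgue. q x) = 0}"

definition inf_sup :: "(real^'d) set \<Rightarrow> (real^'d \<Rightarrow> real^'d) set \<Rightarrow> (real^'d \<Rightarrow> real) set \<Rightarrow> bool" where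
  "inf_sup \<Omega> W Q \<longleftrightarrow> (\<exists>\<beta>>0. \<forall>q\<in>Q.
      \<beta> * sqrt (L2ips \<Omega> q q) \<le>
      (SUP w\<in>{w\<in>W. gradip \<Omega> w w \<noteq> 0}. L2ips \<Omega> (divg w) q / sqrt (gradip \<Omega> w w)))"

end

theory Submission
  imports Defs
begin



lemma poinc1d_core:
  fixes g g' :: "real \<Rightarrow> real" and R :: real
  assumes R: "R > 0" and cont: "continuous_on UNIV g"
    and zero: "\<And>s. \<not> (-R < s \<and> s < R) \<Longrightarrow> g s = 0"
    and K: "finite K" and der: "\<And>s. s \<notin> K \<Longrightarrow> (g has_real_derivative g' s) (at s)"
    and meas: "g' \<in> borel_measurable borel"
  shows "(\<integral>\<^sup>+s. ennreal ((g s)^2) \<partial>lborel) \<le> ennreal (4*R^2) * (\<integral>\<^sup>+s. ennreal ((g' s)^2) \<partial>lborel)"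
proof -
  have eqL: "(\<integral>\<^sup>+s. ennreal ((g s)^2) \<partial>lborel) = (\<integral>\<^sup>+s. ennreal (indicator {-R..R} s * (g s)^2) \<partial>lborel)"
  proof (rule nn_integral_cong)
    fix s show "ennreal ((g s)^2) = ennreal (indicator {-R..R} s * (g s)^2)"
      using zero[of s] by (cases "-R < s \<and> s < R") (auto simp: indicator_def)
  qed
  have le2: "(\<integral>\<^sup>+s. ennreal (indicator {-R..R} s * (g' s)^2) \<partial>lborel) \<le> (\<integral>\<^sup>+s. ennreal ((g' s)^2) \<partial>lborel)"
    by (rule nn_integral_mono) (auto simp: indicator_def)
  show ?thesis
  proof (cases "(\<integral>\<^sup>+s. ennreal (indicator {-R..R} s * (g' s)^2) \<partial>lborel) = \<infinity>")
    case True
    then have "(\<integral>\<^sup>+s. ennreal ((g' s)^2) \<partial>lborel) = \<infinity>" using le2 by (simp add: top_unique)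
    then show ?thesis using R by (simp add: ennreal_mult_top)
  next
    case False
    have mb: "(\<lambda>s. indicator {-R..R} s * (g' s)^2) \<in> borel_measurable borel" using meas by measurable
    have "(\<lambda>s. indicator {-R..R} s * (g' s)^2) integrable_on UNIV"
      by (rule nn_integral_integrable_on[OF mb]) (use False in \<open>auto simp: top.not_eq_extremum\<close>)
    then have i2: "(\<lambda>s. (g' s)^2) integrable_on {-R..R}"
      apply -
    proof -
      assume a: "(\<lambda>s. indicator {-R..R} s * (g' s)^2) integrable_on UNIV"
      have "(\<lambda>s. indicator {-R..R} s * (g' s)^2) = (\<lambda>x. if x \<in> {-R..R} then (g' x)^2 else 0)"
        by (auto simp: indicator_def)
      with a show ?thesis using integrable_restrict_UNIV[of "{-R..R}" "\<lambda>s. (g' s)^2"] by metis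
    qed
    define J2 where "J2 = integral {-R..R} (\<lambda>s. (g' s)^2)"
    have h2: "((\<lambda>s. (g' s)^2) has_integral J2) {-R..R}" using i2 J2_def by auto
    have i1: "(\<lambda>s. (g s)^2) integrable_on {-R..R}"
      by (intro integrable_continuous_interval continuous_intros continuous_on_subset[OF cont]) auto
    define J1 where "J1 = integral {-R..R} (\<lambda>s. (g s)^2)"
    have h1: "((\<lambda>s. (g s)^2) has_integral J1) {-R..R}" using i1 J1_def by auto
    have ftc: "((\<lambda>s. (g s)^2 + 2 * s * g s * g' s) has_integral (R * (g R)^2 - (-R) * (g (-R))^2)) {-R..R}"
    proof (rule fundamental_theorem_of_calculus_interior_strong[OF K])
      show "-R \<le> R" using R by simp
      fix s assume "s \<in> {-R<..<R} - K"
      then have d: "(g has_real_derivative g' s) (at s)" using der by auto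
      have "((\<lambda>s. s * (g s)^2) has_real_derivative (g s)^2 + 2 * s * g s * g' s) (at s)"
        by (rule derivative_eq_intros d refl)+ (simp add: algebra_simps power2_eq_square)
      then show "((\<lambda>s. s * (g s)^2) has_vector_derivative (g s)^2 + 2 * s * g s * g' s) (at s)"
        by (simp add: has_real_derivative_iff_has_vector_derivative)
    next
      show "continuous_on {-R..R} (\<lambda>s. s * (g s)^2)"
        by (intro continuous_intros continuous_on_subset[OF cont]) auto
    qed
    have "g R = 0" "g (-R) = 0" using zero by auto
    then have ftc0: "((\<lambda>s. (g s)^2 + 2 * s * g s * g' s) has_integral 0) {-R..R}" using ftc by simp
    have hm: "((\<lambda>s. - (2 * s * g s * g' s)) has_integral J1) {-R..R}"
      using has_integral_diff[OF h1 ftc0] by simp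
    have hr: "((\<lambda>s. (g s)^2 / 2 + 2*R^2 * (g' s)^2) has_integral (J1/2 + 2*R^2*J2)) {-R..R}"
      by (intro has_integral_add has_integral_divide has_integral_mult_right h1 h2)
    have pw: "- (2 * s * g s * g' s) \<le> (g s)^2 / 2 + 2*R^2 * (g' s)^2" if "s \<in> {-R..R}" for s
    proof -
      have "s^2 \<le> R^2" using that R by (intro power2_le_iff_abs_le[THEN iffD2]) auto
      then have "s^2 * (g' s)^2 \<le> R^2 * (g' s)^2" by (intro mult_right_mono) auto
      moreover have "0 \<le> (g s / 2 + s * g' s)^2" by simp
      ultimately show ?thesis by (simp add: power2_eq_square algebra_simps)
    qed
    have "J1 \<le> J1/2 + 2*R^2*J2" by (rule has_integral_le[OF hm hr pw])
    then have J: "J1 \<le> 4*R^2*J2" by simp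
    have "(\<integral>\<^sup>+s. ennreal ((g s)^2) \<partial>lborel) = ennreal J1"
      unfolding eqL by (rule nn_integral_has_integral_lebesgue[OF _ h1]) simp
    also have "\<dots> \<le> ennreal (4*R^2*J2)" using J by (rule ennreal_leI)
    also have "\<dots> = ennreal (4*R^2) * ennreal J2"
      by (rule ennreal_mult) (use has_integral_nonneg[OF h2] in auto)
    also have "ennreal J2 = (\<integral>\<^sup>+s. ennreal (indicator {-R..R} s * (g' s)^2) \<partial>lborel)"
      by (rule nn_integral_has_integral_lebesgue[OF _ h2, symmetric]) simp
    finally show ?thesis using le2 by (meson mult_left_mono order_trans zero_le)
  qed
qed

lemma poinc1d:
  fixes g g' :: "real \<Rightarrow> real" and R :: real and U :: "real set"
  assumes R: "R > 0" and cont: "continuous_on UNIV g"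
    and zeroU: "\<And>s. s \<notin> U \<Longrightarrow> g s = 0" and Ub: "U \<subseteq> {-R<..<R}"
    and U: "U \<in> sets borel"
    and K: "finite K" and der: "\<And>s. s \<notin> K \<Longrightarrow> (g has_real_derivative g' s) (at s)"
    and meas: "g' \<in> borel_measurable borel"
  shows "(\<integral>\<^sup>+s. ennreal ((g s)^2) \<partial>lborel) \<le> ennreal (4*R^2) * (\<integral>\<^sup>+s. indicator U s * ennreal ((g' s)^2) \<partial>lborel)"
proof -
  have core: "(\<integral>\<^sup>+s. ennreal ((g s)^2) \<partial>lborel) \<le> ennreal (4*R^2) * (\<integral>\<^sup>+s. ennreal ((g' s)^2) \<partial>lborel)"
  proof (rule poinc1d_core[OF R cont _ K der meas])
    fix s assume "\<not> (-R < s \<and> s < R)" then have "s \<notin> U" using Ub by auto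
    then show "g s = 0" using zeroU by auto
  qed
  define Z where "Z = {s. s \<notin> U \<and> s \<notin> K \<and> g' s \<noteq> 0}"
  have "\<exists>d>0. \<forall>h>0. h < d \<longrightarrow> s + h \<in> U" if "s \<in> Z" for s
  proof -
    have gs: "g s = 0" and d: "(g has_real_derivative g' s) (at s)" and nz: "g' s \<noteq> 0"
      using that zeroU der by (auto simp: Z_def)
    show ?thesis
    proof (cases "g' s > 0")
      case True
      from DERIV_pos_inc_right[OF d True] obtain d where "d > 0" "\<forall>h>0. h < d \<longrightarrow> g s < g (s + h)" by auto
      then show ?thesis using gs zeroU by (metis less_irrefl)
    next
      case False
      then have "g' s < 0" using nz by auto
      from DERIV_neg_dec_right[OF d this] obtain d where "d > 0" "\<forall>h>0. h < d \<longrightarrow> g s > g (s + h)" by auto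
      then show ?thesis using gs zeroU by (metis less_irrefl)
    qed
  qed
  then obtain d where d: "\<And>s. s \<in> Z \<Longrightarrow> d s > 0 \<and> (\<forall>h>0. h < d s \<longrightarrow> s + h \<in> U)" by metis
  have "\<exists>q\<in>\<rat>. s < q \<and> q < s + d s" if "s \<in> Z" for s
    using Rats_dense_in_real[of s "s + d s"] d[OF that] by auto
  then obtain q where q: "\<And>s. s \<in> Z \<Longrightarrow> q s \<in> \<rat> \<and> s < q s \<and> q s < s + d s" by metis
  have key: "q s1 < q s2" if "s1 \<in> Z" "s2 \<in> Z" "s1 < s2" for s1 s2
  proof -
    have "s2 \<notin> U" using that by (auto simp: Z_def)
    then have "\<not> (s2 - s1 < d s1)" using d[OF that(1)] that(3)
      by (metis add.commute diff_add_cancel diff_gt_0_iff_gt)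
    then show ?thesis using q[OF that(1)] q[OF that(2)] by auto
  qed
  have inj: "inj_on q Z"
  proof (rule inj_onI)
    fix s1 s2 assume a: "s1 \<in> Z" "s2 \<in> Z" "q s1 = q s2"
    show "s1 = s2"
    proof (rule ccontr)
      assume "s1 \<noteq> s2"
      then consider "s1 < s2" | "s2 < s1" by linarith
      then show False using key a by (metis less_irrefl)
    qed
  qed
  have "countable (q ` Z)" using q by (intro countable_subset[OF _ countable_rat]) auto
  then have cZ: "countable (Z \<union> K)" using inj K by (auto intro: countable_image_inj_on countable_finite)
  have "AE s in lborel. s \<notin> Z \<union> K"
    by (rule AE_not_in countable_imp_null_set_lborel cZ)+
  then have "(\<integral>\<^sup>+s. ennreal ((g' s)^2) \<partial>lborel) = (\<integral>\<^sup>+s. indicator U s * ennreal ((g' s)^2) \<partial>lborel)"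
    by (rule nn_integral_cong_AE[OF AE_mp]) (auto simp: Z_def indicator_def)
  with core show ?thesis by simp
qed



lemma Phi_meas: "(\<lambda>f. \<Sum>b\<in>Basis. f b *\<^sub>R b) \<in> borel_measurable (\<Pi>\<^sub>M b\<in>(Basis::'a::euclidean_space set). (lborel::real measure))"
  by measurable

lemma lborel_fubini_e:
  fixes h :: "'a::euclidean_space \<Rightarrow> ennreal" and e :: 'a
  assumes h: "h \<in> borel_measurable borel" and e: "e \<in> Basis"
  shows "(\<integral>\<^sup>+x. h x \<partial>lborel) = (\<integral>\<^sup>+x'. (\<integral>\<^sup>+t. h ((\<Sum>b\<in>Basis-{e}. x' b *\<^sub>R b) + t *\<^sub>R e) \<partial>lborel) \<partial>(\<Pi>\<^sub>M b\<in>Basis-{e}. lborel))"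
proof -
  interpret P: product_sigma_finite "\<lambda>_::'a. (lborel::real measure)"
    by (simp add: product_sigma_finite_def lborel.sigma_finite_measure_axioms)
  have hm: "(\<lambda>f. h (\<Sum>b\<in>Basis. f b *\<^sub>R b)) \<in> borel_measurable (\<Pi>\<^sub>M b\<in>(Basis::'a set). (lborel::real measure))"
    using measurable_compose[OF Phi_meas h] by (simp add: o_def)
  have "(\<integral>\<^sup>+x. h x \<partial>lborel) = (\<integral>\<^sup>+x. h x \<partial>(distr (\<Pi>\<^sub>M b\<in>Basis. lborel) borel (\<lambda>f. \<Sum>b\<in>Basis. f b *\<^sub>R b)))"
    by (simp only: lborel_eq[where 'a='a, symmetric])
  also have "\<dots> = (\<integral>\<^sup>+f. h (\<Sum>b\<in>Basis. f b *\<^sub>R b) \<partial>(\<Pi>\<^sub>M b\<in>Basis. lborel))"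
    by (rule nn_integral_distr[OF Phi_meas]) (use h in simp)
  also have "Basis = insert e (Basis - {e})" using e by auto
  also have "(\<integral>\<^sup>+f. h (\<Sum>b\<in>insert e (Basis - {e}). f b *\<^sub>R b) \<partial>(\<Pi>\<^sub>M b\<in>insert e (Basis - {e}). lborel))
      = (\<integral>\<^sup>+x. (\<integral>\<^sup>+y. h (\<Sum>b\<in>insert e (Basis - {e}). (x(e := y)) b *\<^sub>R b) \<partial>lborel) \<partial>(\<Pi>\<^sub>M b\<in>Basis - {e}. lborel))"
    by (rule P.product_nn_integral_insert) (use hm e in \<open>auto simp: insert_absorb\<close>)
  also have "\<dots> = (\<integral>\<^sup>+x'. (\<integral>\<^sup>+t. h ((\<Sum>b\<in>Basis-{e}. x' b *\<^sub>R b) + t *\<^sub>R e) \<partial>lborel) \<partial>(\<Pi>\<^sub>M b\<in>Basis-{e}. lborel))"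
  proof (intro nn_integral_cong)
    fix x :: "'a \<Rightarrow> real" and y :: real
    have "(\<Sum>b\<in>insert e (Basis - {e}). (x(e := y)) b *\<^sub>R b) = y *\<^sub>R e + (\<Sum>b\<in>Basis - {e}. (x(e := y)) b *\<^sub>R b)"
      by (subst sum.insert) auto
    also have "(\<Sum>b\<in>Basis - {e}. (x(e := y)) b *\<^sub>R b) = (\<Sum>b\<in>Basis - {e}. x b *\<^sub>R b)"
      by (rule sum.cong) auto
    finally show "h (\<Sum>b\<in>insert e (Basis - {e}). (x(e := y)) b *\<^sub>R b) = h ((\<Sum>b\<in>Basis-{e}. x b *\<^sub>R b) + y *\<^sub>R e)"
      by (simp add: add.commute)
  qed
  finally show ?thesis .
qed



definition polyf :: "(('d::finite \<Rightarrow> nat) \<Rightarrow> real) \<Rightarrow> nat \<Rightarrow> real^'d \<Rightarrow> real" where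
  "polyf c r x = (\<Sum>\<alpha>\<in>{\<alpha>::'d \<Rightarrow> nat. sum \<alpha> UNIV \<le> r}. c \<alpha> * (\<Prod>i\<in>UNIV. (x $ i) ^ (\<alpha> i)))"

definition dpolyf :: "(('d::finite \<Rightarrow> nat) \<Rightarrow> real) \<Rightarrow> nat \<Rightarrow> real^'d \<Rightarrow> real^'d \<Rightarrow> real" where
  "dpolyf c r x y = (\<Sum>\<alpha>\<in>{\<alpha>::'d \<Rightarrow> nat. sum \<alpha> UNIV \<le> r}. c \<alpha> *
      (\<Sum>i\<in>UNIV. of_nat (\<alpha> i) * y $ i * (x $ i) ^ (\<alpha> i - 1) * (\<Prod>j\<in>UNIV - {i}. (x $ j) ^ (\<alpha> j))))"

lemma vec_nth_has_derivative: "((\<lambda>x::real^'d. x $ i) has_derivative (\<lambda>y. y $ i)) F"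
  by (rule bounded_linear_imp_has_derivative) (rule bounded_linear_vec_nth)

lemma polyf_has_derivative: "(polyf c r has_derivative dpolyf c r x) (at x within S)"
  unfolding polyf_def[abs_def] dpolyf_def
  by (intro has_derivative_sum has_derivative_mult_right has_derivative_prod has_derivative_power vec_nth_has_derivative)

lemma dpolyf_continuous: "continuous_on A (\<lambda>x. dpolyf c r x y)"
  unfolding dpolyf_def by (intro continuous_intros)

lemma dpolyf_scale: "dpolyf c r x (h *\<^sub>R y) = h * dpolyf c r x y"
  unfolding dpolyf_def by (simp add: sum_distrib_left algebra_simps)

lemma polyf_line_deriv:
  "((\<lambda>t. polyf c r (x0 + t *\<^sub>R e)) has_real_derivative dpolyf c r (x0 + t *\<^sub>R e) e) (at t)"
proof -
  have l: "((\<lambda>t. x0 + t *\<^sub>R e) has_derivative (\<lambda>h. h *\<^sub>R e)) (at t)"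
    by (intro derivative_eq_intros) auto
  have "((\<lambda>t. polyf c r (x0 + t *\<^sub>R e)) has_derivative (\<lambda>h. dpolyf c r (x0 + t *\<^sub>R e) (h *\<^sub>R e))) (at t)"
    using has_derivative_compose[OF l polyf_has_derivative] by (simp add: o_def)
  moreover have "(\<lambda>h. dpolyf c r (x0 + t *\<^sub>R e) (h *\<^sub>R e)) = (*) (dpolyf c r (x0 + t *\<^sub>R e) e)"
    by (simp add: fun_eq_iff dpolyf_scale mult.commute)
  ultimately show ?thesis
    by (simp add: has_field_derivative_def)
qed

definition pdB :: "(real^'d::finite \<Rightarrow> real) \<Rightarrow> 'd \<Rightarrow> real^'d \<Rightarrow> real" where
  "pdB u j x = lim (\<lambda>m. real (Suc m) * (u (x + inverse (real (Suc m)) *\<^sub>R axis j 1) - u x))"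

lemma pdB_pd:
  assumes d: "((\<lambda>t. u (x + t *\<^sub>R axis j 1)) has_real_derivative D) (at 0)"
  shows "pdB u j x = D" "pd u j x = D"
proof -
  show "pd u j x = D" unfolding pd_def using d by (rule DERIV_imp_deriv)
  have t: "((\<lambda>h. (u (x + h *\<^sub>R axis j 1) - u (x + 0 *\<^sub>R axis j 1)) / (h - 0)) \<longlongrightarrow> D) (at 0)"
    using d unfolding has_field_derivative_iff by simp
  have f: "filterlim (\<lambda>m. inverse (real (Suc m))) (at 0) sequentially"
    unfolding filterlim_at using LIMSEQ_inverse_real_of_nat by auto
  have "(\<lambda>m. (u (x + inverse (real (Suc m)) *\<^sub>R axis j 1) - u (x + 0 *\<^sub>R axis j 1)) / (inverse (real (Suc m)) - 0)) \<longlonglongrightarrow> D"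
    using filterlim_compose[OF t f] by simp
  then have "(\<lambda>m. real (Suc m) * (u (x + inverse (real (Suc m)) *\<^sub>R axis j 1) - u x)) \<longlonglongrightarrow> D"
    by (simp add: divide_inverse mult.commute)
  then show "pdB u j x = D" unfolding pdB_def by (rule limI)
qed

lemma pdB_borel:
  assumes u: "continuous_on UNIV u"
  shows "pdB u j \<in> borel_measurable borel"
  unfolding pdB_def
proof (rule borel_measurable_lim_metric)
  fix m
  have "continuous_on UNIV (\<lambda>x. real (Suc m) * (u (x + inverse (real (Suc m)) *\<^sub>R axis j 1) - u x))"
    by (intro continuous_intros continuous_on_compose2[OF u]) auto
  then show "(\<lambda>x. real (Suc m) * (u (x + inverse (real (Suc m)) *\<^sub>R axis j 1) - u x)) \<in> borel_measurable borel"
    by (rule borel_measurable_continuous_onI)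
qed

lemma line_deriv_poly:
  fixes v :: "real^'d::finite \<Rightarrow> real^'d"
  assumes Op: "open Op" "x0 + t *\<^sub>R e \<in> Op" and eq: "\<And>y. y \<in> Op \<Longrightarrow> v y $ i = polyf c r y"
  shows "((\<lambda>s. v (x0 + s *\<^sub>R e) $ i) has_real_derivative dpolyf c r (x0 + t *\<^sub>R e) e) (at t)"
proof (rule has_field_derivative_transform_within_open[OF polyf_line_deriv])
  show "open {s. x0 + s *\<^sub>R e \<in> Op}"
    by (rule open_vimage[OF Op(1), unfolded vimage_def]) (intro continuous_intros)
  show "t \<in> {s. x0 + s *\<^sub>R e \<in> Op}" using Op(2) by simp
  fix s assume "s \<in> {s. x0 + s *\<^sub>R e \<in> Op}"
  then show "polyf c r (x0 + s *\<^sub>R e) = v (x0 + s *\<^sub>R e) $ i" using eq by simp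
qed

lemma line_deriv_zero:
  fixes v :: "real^'d::finite \<Rightarrow> real^'d"
  assumes C: "closed C" "x0 + t *\<^sub>R e \<notin> C" and eq: "\<And>y. y \<notin> C \<Longrightarrow> v y = 0"
  shows "((\<lambda>s. v (x0 + s *\<^sub>R e) $ i) has_real_derivative 0) (at t)"
proof (rule has_field_derivative_transform_within_open[OF DERIV_const])
  show "open {s. x0 + s *\<^sub>R e \<in> - C}"
    by (rule open_vimage[OF C(1)[unfolded closed_def], unfolded vimage_def]) (intro continuous_intros)
  show "t \<in> {s. x0 + s *\<^sub>R e \<in> - C}" using C(2) by simp
  fix s assume "s \<in> {s. x0 + s *\<^sub>R e \<in> - C}"
  then show "0 = v (x0 + s *\<^sub>R e) $ i" using eq by simp
qed

lemma Wh_poly: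
  assumes "v \<in> Wh \<Omega> T r" "S \<in> T"
  shows "\<exists>c. \<forall>x\<in>convex hull S. v x $ i = polyf c r x"
  using assms unfolding Wh_def poly_on_def polyf_def by auto

lemma Wh_zero:
  assumes "v \<in> Wh \<Omega> T r" "x \<notin> \<Omega>" shows "v x = 0"
  using assms unfolding Wh_def by auto

lemma Wh_cont:
  assumes "v \<in> Wh \<Omega> T r" shows "continuous_on UNIV v"
  using assms unfolding Wh_def by auto

lemma tri_cover:
  assumes "triangulation \<Omega> T" "x \<in> closure \<Omega>"
  obtains S where "S \<in> T" "x \<in> convex hull S"
  using assms unfolding triangulation_def by blast

lemma tri_compact:
  assumes "triangulation \<Omega> T" "S \<in> T"
  shows "compact (convex hull S)"
  using assms unfolding triangulation_def by (auto intro: compact_convex_hull finite_imp_compact)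

lemma Wh_line:
  fixes v :: "real^'d::finite \<Rightarrow> real^'d"
  assumes tri: "triangulation \<Omega> T" and v: "v \<in> Wh \<Omega> T r"
  shows "\<exists>K. finite K \<and> (\<forall>t. t \<notin> K \<longrightarrow> (\<exists>D. ((\<lambda>s. v (x0 + s *\<^sub>R axis j 1) $ i) has_real_derivative D) (at t)))"
proof -
  define e :: "real^'d" where "e = axis j 1"
  define I where "I S = {t. x0 + t *\<^sub>R e \<in> convex hull S}" for S
  define K where "K = (\<Union>S\<in>T. {Inf (I S), Sup (I S)})"
  have fin: "finite K" using tri unfolding K_def triangulation_def by auto
  have "\<exists>D. ((\<lambda>s. v (x0 + s *\<^sub>R e) $ i) has_real_derivative D) (at t)" if tK: "t \<notin> K" for t
  proof (cases "x0 + t *\<^sub>R e \<in> closure \<Omega>")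
    case False
    have "((\<lambda>s. v (x0 + s *\<^sub>R e) $ i) has_real_derivative 0) (at t)"
      by (rule line_deriv_zero[OF closed_closure False]) (use Wh_zero[OF v] closure_subset in blast)
    then show ?thesis by blast
  next
    case True
    then obtain S where S: "S \<in> T" "x0 + t *\<^sub>R e \<in> convex hull S" using tri_cover[OF tri] by blast
    obtain c where c: "\<forall>x\<in>convex hull S. v x $ i = polyf c r x" using Wh_poly[OF v S(1)] by blast
    have cpt: "compact (convex hull S)" by (rule tri_compact[OF tri S(1)])
    then obtain B where B: "\<And>x. x \<in> convex hull S \<Longrightarrow> norm x \<le> B"
      using compact_imp_bounded bounded_iff by metis
    have ne: "norm e = 1" by (simp add: e_def)
    have Ibd: "\<bar>s\<bar> \<le> B + norm x0" if "s \<in> I S" for s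
    proof -
      have "\<bar>s\<bar> = norm ((x0 + s *\<^sub>R e) - x0)" using ne by simp
      also have "\<dots> \<le> norm (x0 + s *\<^sub>R e) + norm x0" by (rule norm_triangle_ineq4)
      also have "\<dots> \<le> B + norm x0" using B that by (simp add: I_def)
      finally show ?thesis .
    qed
    have bb: "bdd_below (I S)" "bdd_above (I S)"
    proof -
      show "bdd_below (I S)" unfolding bdd_below_def
        by (rule exI[of _ "-(B + norm x0)"]) (use Ibd in \<open>force simp: abs_le_iff\<close>)
      show "bdd_above (I S)" unfolding bdd_above_def
        by (rule exI[of _ "B + norm x0"]) (use Ibd in \<open>force simp: abs_le_iff\<close>)
    qed
    have tI: "t \<in> I S" using S by (simp add: I_def)
    have cl: "closed (I S)" unfolding I_def
      using continuous_closed_vimage[OF compact_imp_closed[OF cpt], of "\<lambda>t. x0 + t *\<^sub>R e"]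
      by (simp add: vimage_def continuous_intros)
    have ab: "Inf (I S) \<in> I S" "Sup (I S) \<in> I S"
      using closed_contains_Inf[OF _ bb(1) cl] closed_contains_Sup[OF _ bb(2) cl] tI by auto
    have "Inf (I S) \<le> t" "t \<le> Sup (I S)" using cInf_lower[OF tI bb(1)] cSup_upper[OF tI bb(2)] by auto
    moreover have "t \<noteq> Inf (I S)" "t \<noteq> Sup (I S)" using tK S(1) by (auto simp: K_def)
    ultimately have lt: "Inf (I S) < t" "t < Sup (I S)" by auto
    define a where "a = Inf (I S)"
    define b where "b = Sup (I S)"
    have sub: "u \<in> I S" if "a < u" "u < b" for u
    proof -
      define l where "l = (u - a) / (b - a)"
      have l: "0 \<le> l" "l \<le> 1" using that by (auto simp: l_def field_simps)
      have "(1 - l) *\<^sub>R (x0 + a *\<^sub>R e) + l *\<^sub>R (x0 + b *\<^sub>R e) \<in> convex hull S"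
        by (rule convexD[OF convex_convex_hull]) (use ab l in \<open>auto simp: I_def a_def b_def\<close>)
      moreover have "(1 - l) *\<^sub>R (x0 + a *\<^sub>R e) + l *\<^sub>R (x0 + b *\<^sub>R e) = x0 + ((1 - l) * a + l * b) *\<^sub>R e"
        by (simp add: algebra_simps)
      moreover have "(1 - l) * a + l * b = u"
      proof -
        have "l * (b - a) = u - a" using that by (simp add: l_def)
        moreover have "(1 - l) * a + l * b = a + l * (b - a)" by (simp add: algebra_simps)
        ultimately show ?thesis by simp
      qed
      ultimately show ?thesis by (simp add: I_def)
    qed
    have "((\<lambda>s. v (x0 + s *\<^sub>R e) $ i) has_real_derivative dpolyf c r (x0 + t *\<^sub>R e) e) (at t)"
    proof (rule has_field_derivative_transform_within_open[OF polyf_line_deriv, where S="{a<..<b}"])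
      show "open {a<..<b}" by simp
      show "t \<in> {a<..<b}" using lt by (simp add: a_def b_def)
      fix s assume "s \<in> {a<..<b}"
      then have "s \<in> I S" using sub by auto
      then show "polyf c r (x0 + s *\<^sub>R e) = v (x0 + s *\<^sub>R e) $ i" using c by (simp add: I_def)
    qed
    then show ?thesis by blast
  qed
  then show ?thesis using fin unfolding e_def by blast
qed

lemma Wh_point:
  fixes v :: "real^'d::finite \<Rightarrow> real^'d"
  assumes tri: "triangulation \<Omega> T" and v: "v \<in> Wh \<Omega> T r"
    and x: "x \<notin> (\<Union>S\<in>T. frontier (convex hull S))"
  shows "\<exists>D. ((\<lambda>s. v (x + s *\<^sub>R axis j 1) $ i) has_real_derivative D) (at 0)"
proof (cases "x \<in> closure \<Omega>")
  case False
  have "((\<lambda>s. v (x + s *\<^sub>R axis j 1) $ i) has_real_derivative 0) (at 0)"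
    by (rule line_deriv_zero[OF closed_closure]) (use False Wh_zero[OF v] closure_subset in auto)
  then show ?thesis by blast
next
  case True
  then obtain S where S: "S \<in> T" "x \<in> convex hull S" using tri_cover[OF tri] by blast
  obtain c where c: "\<forall>x\<in>convex hull S. v x $ i = polyf c r x" using Wh_poly[OF v S(1)] by blast
  have "closed (convex hull S)" by (rule compact_imp_closed[OF tri_compact[OF tri S(1)]])
  then have xi: "x \<in> interior (convex hull S)" using x S by (auto simp: frontier_def)
  have "((\<lambda>s. v (x + s *\<^sub>R axis j 1) $ i) has_real_derivative dpolyf c r (x + 0 *\<^sub>R axis j 1) (axis j 1)) (at 0)"
    by (rule line_deriv_poly[of "interior (convex hull S)"]) (use xi c interior_subset in auto)
  then show ?thesis by blast
qed

lemma Wh_interior_pd: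
  fixes v :: "real^'d::finite \<Rightarrow> real^'d"
  assumes c: "\<forall>x\<in>convex hull S. v x $ i = polyf c r x" and xi: "x \<in> interior (convex hull S)"
  shows "pdB (\<lambda>y. v y $ i) j x = dpolyf c r x (axis j 1)" "pd (\<lambda>y. v y $ i) j x = dpolyf c r x (axis j 1)"
proof -
  have "((\<lambda>s. v (x + s *\<^sub>R axis j 1) $ i) has_real_derivative dpolyf c r (x + 0 *\<^sub>R axis j 1) (axis j 1)) (at 0)"
    by (rule line_deriv_poly[of "interior (convex hull S)"]) (use xi c interior_subset in auto)
  then have "((\<lambda>s. v (x + s *\<^sub>R axis j 1) $ i) has_real_derivative dpolyf c r x (axis j 1)) (at 0)" by simp
  from pdB_pd[OF this] show "pdB (\<lambda>y. v y $ i) j x = dpolyf c r x (axis j 1)" "pd (\<lambda>y. v y $ i) j x = dpolyf c r x (axis j 1)"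
    by auto
qed





lemma poinc_scalar:
  fixes u :: "real^'d::finite \<Rightarrow> real" and \<Omega> :: "(real^'d) set" and R :: real
  assumes R: "R > 0" and op: "open \<Omega>" and sub: "\<Omega> \<subseteq> ball 0 R"
    and cont: "continuous_on UNIV u" and zero: "\<And>x. x \<notin> \<Omega> \<Longrightarrow> u x = 0"
    and line: "\<And>x0. \<exists>K. finite K \<and> (\<forall>t. t \<notin> K \<longrightarrow> (\<exists>D. ((\<lambda>s. u (x0 + s *\<^sub>R axis j0 1)) has_real_derivative D) (at t)))"
  shows "(\<integral>\<^sup>+x. ennreal ((u x)^2) \<partial>lborel) \<le> ennreal (4*R^2) * (\<integral>\<^sup>+x. indicator \<Omega> x * ennreal ((pdB u j0 x)^2) \<partial>lborel)"
proof -
  define e :: "real^'d" where "e = axis j0 1"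
  have eB: "e \<in> Basis" unfolding e_def by simp
  define c where "c = ennreal (4*R^2)"
  have um: "u \<in> borel_measurable borel" using cont by (rule borel_measurable_continuous_onI)
  have pm: "pdB u j0 \<in> borel_measurable borel" using cont by (rule pdB_borel)
  have Om: "\<Omega> \<in> sets borel" using op by simp
  have h2m: "(\<lambda>x. c * (indicator \<Omega> x * ennreal ((pdB u j0 x)^2))) \<in> borel_measurable borel"
    using pm Om by measurable
  have h1m: "(\<lambda>x. ennreal ((u x)^2)) \<in> borel_measurable borel" using um by measurable
  have inner: "(\<integral>\<^sup>+t. ennreal ((u (x0 + t *\<^sub>R e))^2) \<partial>lborel)
      \<le> (\<integral>\<^sup>+t. c * (indicator \<Omega> (x0 + t *\<^sub>R e) * ennreal ((pdB u j0 (x0 + t *\<^sub>R e))^2)) \<partial>lborel)"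
    if x0: "x0 \<bullet> e = 0" for x0
  proof -
    define U where "U = {t. x0 + t *\<^sub>R e \<in> \<Omega>}"
    have am: "(\<lambda>t::real. x0 + t *\<^sub>R e) \<in> borel_measurable borel"
      by (intro borel_measurable_continuous_onI continuous_intros)
    obtain K where K: "finite K" "\<And>t. t \<notin> K \<Longrightarrow> \<exists>D. ((\<lambda>s. u (x0 + s *\<^sub>R e)) has_real_derivative D) (at t)"
      using line[of x0] unfolding e_def by blast
    have 1: "(\<integral>\<^sup>+t. ennreal ((u (x0 + t *\<^sub>R e))^2) \<partial>lborel) \<le> c * (\<integral>\<^sup>+t. indicator U t * ennreal ((pdB u j0 (x0 + t *\<^sub>R e))^2) \<partial>lborel)"
      unfolding c_def
    proof (rule poinc1d[OF R])
      show "continuous_on UNIV (\<lambda>t. u (x0 + t *\<^sub>R e))"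
        by (intro continuous_on_compose2[OF cont] continuous_intros) auto
      show "u (x0 + s *\<^sub>R e) = 0" if "s \<notin> U" for s using that zero by (simp add: U_def)
      show "U \<subseteq> {-R<..<R}"
      proof
        fix t assume "t \<in> U"
        then have "x0 + t *\<^sub>R e \<in> ball 0 R" using sub by (auto simp: U_def)
        moreover have "(x0 + t *\<^sub>R e) \<bullet> e = t" using x0 eB by (simp add: inner_add_left)
        moreover have "\<bar>(x0 + t *\<^sub>R e) \<bullet> e\<bar> \<le> norm (x0 + t *\<^sub>R e)" by (rule Basis_le_norm[OF eB])
        ultimately show "t \<in> {-R<..<R}" by (auto simp: abs_less_iff)
      qed
      show "U \<in> sets borel" unfolding U_def
        by (rule borel_open, rule open_vimage[OF op, unfolded vimage_def]) (intro continuous_intros)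
      show "finite K" by (rule K(1))
      show "((\<lambda>t. u (x0 + t *\<^sub>R e)) has_real_derivative pdB u j0 (x0 + t *\<^sub>R e)) (at t)" if tK: "t \<notin> K" for t
      proof -
        obtain D where D: "((\<lambda>s. u (x0 + s *\<^sub>R e)) has_real_derivative D) (at t)" using K(2)[OF tK] by blast
        then have "((\<lambda>s. u (x0 + (s + t) *\<^sub>R e)) has_real_derivative D) (at 0)"
          using DERIV_shift[of "\<lambda>s. u (x0 + s *\<^sub>R e)" D 0 t] by simp
        then have "((\<lambda>s. u ((x0 + t *\<^sub>R e) + s *\<^sub>R axis j0 1)) has_real_derivative D) (at 0)"
          by (simp add: e_def algebra_simps)
        then have "pdB u j0 (x0 + t *\<^sub>R e) = D" by (rule pdB_pd)
        with D show ?thesis by simp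
      qed
      show "(\<lambda>t. pdB u j0 (x0 + t *\<^sub>R e)) \<in> borel_measurable borel"
        using measurable_compose[OF am pm] by (simp add: o_def)
    qed
    also have "\<dots> = (\<integral>\<^sup>+t. c * (indicator U t * ennreal ((pdB u j0 (x0 + t *\<^sub>R e))^2)) \<partial>lborel)"
    proof (rule nn_integral_cmult[symmetric])
      have "U \<in> sets borel" unfolding U_def
        by (rule borel_open, rule open_vimage[OF op, unfolded vimage_def]) (intro continuous_intros)
      then show "(\<lambda>t. indicator U t * ennreal ((pdB u j0 (x0 + t *\<^sub>R e))^2)) \<in> borel_measurable lborel"
        using measurable_compose[OF am pm] by (simp add: o_def)
    qed
    also have "\<dots> = (\<integral>\<^sup>+t. c * (indicator \<Omega> (x0 + t *\<^sub>R e) * ennreal ((pdB u j0 (x0 + t *\<^sub>R e))^2)) \<partial>lborel)"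
      by (rule nn_integral_cong) (simp add: U_def indicator_def)
    finally show ?thesis .
  qed
  have x0e: "(\<Sum>b\<in>Basis-{e}. x' b *\<^sub>R b) \<bullet> e = 0" for x' :: "real^'d \<Rightarrow> real"
    using eB by (simp add: inner_sum_left inner_Basis)
  have "(\<integral>\<^sup>+x. ennreal ((u x)^2) \<partial>lborel)
      = (\<integral>\<^sup>+x'. (\<integral>\<^sup>+t. ennreal ((u ((\<Sum>b\<in>Basis-{e}. x' b *\<^sub>R b) + t *\<^sub>R e))^2) \<partial>lborel) \<partial>(\<Pi>\<^sub>M b\<in>Basis-{e}. lborel))"
    by (rule lborel_fubini_e[OF h1m eB])
  also have "\<dots> \<le> (\<integral>\<^sup>+x'. (\<integral>\<^sup>+t. c * (indicator \<Omega> ((\<Sum>b\<in>Basis-{e}. x' b *\<^sub>R b) + t *\<^sub>R e) * ennreal ((pdB u j0 ((\<Sum>b\<in>Basis-{e}. x' b *\<^sub>R b) + t *\<^sub>R e))^2)) \<partial>lborel) \<partial>(\<Pi>\<^sub>M b\<in>Basis-{e}. lborel))"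
    by (rule nn_integral_mono) (rule inner[OF x0e])
  also have "\<dots> = (\<integral>\<^sup>+x. c * (indicator \<Omega> x * ennreal ((pdB u j0 x)^2)) \<partial>lborel)"
    by (rule lborel_fubini_e[OF h2m eB, symmetric])
  also have "\<dots> = c * (\<integral>\<^sup>+x. indicator \<Omega> x * ennreal ((pdB u j0 x)^2) \<partial>lborel)"
    by (rule nn_integral_cmult) (use pm Om in measurable)
  finally show ?thesis unfolding c_def .
qed




lemma N_null:
  assumes tri: "triangulation \<Omega> T"
  shows "(\<Union>S\<in>T. frontier (convex hull S)) \<in> null_sets lebesgue"
proof -
  have "finite T" using tri by (simp add: triangulation_def)
  then have "negligible (\<Union>((\<lambda>S. frontier (convex hull S)) ` T))"
    by (intro negligible_Union) (auto intro: negligible_convex_frontier)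
  then show ?thesis by (simp add: negligible_iff_null_sets)
qed

lemma AE_pd:
  fixes v :: "real^'d::finite \<Rightarrow> real^'d"
  assumes tri: "triangulation \<Omega> T" and v: "v \<in> Wh \<Omega> T r"
  shows "AE x in lebesgue. \<forall>i j. pdB (\<lambda>y. v y $ i) j x = pd (\<lambda>y. v y $ i) j x"
proof (rule AE_I'[OF N_null[OF tri]])
  show "{x \<in> space lebesgue. \<not> (\<forall>i j. pdB (\<lambda>y. v y $ i) j x = pd (\<lambda>y. v y $ i) j x)} \<subseteq> (\<Union>S\<in>T. frontier (convex hull S))"
  proof (rule subsetI, rule ccontr)
    fix x assume x: "x \<in> {x \<in> space lebesgue. \<not> (\<forall>i j. pdB (\<lambda>y. v y $ i) j x = pd (\<lambda>y. v y $ i) j x)}"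
      and n: "x \<notin> (\<Union>S\<in>T. frontier (convex hull S))"
    then obtain i j where ne: "pdB (\<lambda>y. v y $ i) j x \<noteq> pd (\<lambda>y. v y $ i) j x" by auto
    obtain D where "((\<lambda>s. v (x + s *\<^sub>R axis j 1) $ i) has_real_derivative D) (at 0)"
      using Wh_point[OF tri v n] by blast
    from pdB_pd[of "\<lambda>y. v y $ i", OF this] ne show False by simp
  qed
qed

lemma open_sets_lebesgue: "open (A::('a::euclidean_space) set) \<Longrightarrow> A \<in> sets lebesgue"
  by (simp add: borel_open sets_completionI_sets)

lemma emeasure_lebesgue_bounded_open:
  assumes "open (A::('a::euclidean_space) set)" "bounded A"
  shows "emeasure lebesgue A < \<infinity>"
proof -
  have "A \<in> sets lborel" using assms by (simp add: borel_open)
  then have "emeasure lebesgue A = emeasure lborel A" by (simp add: emeasure_completion main_part_sets)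
  with emeasure_bounded_finite[OF assms(2)] show ?thesis by simp
qed

lemma cont_set_integrable:
  fixes \<phi> :: "real^'d::finite \<Rightarrow> real"
  assumes c: "continuous_on UNIV \<phi>" and b: "bounded \<Omega>" and o: "open \<Omega>"
  shows "set_integrable lebesgue \<Omega> \<phi>"
  unfolding set_integrable_def
proof -
  have "compact (\<phi> ` closure \<Omega>)"
    by (rule compact_continuous_image[OF continuous_on_subset[OF c]]) (use b in \<open>auto simp: compact_closure\<close>)
  then obtain B where B: "\<And>y. y \<in> \<phi> ` closure \<Omega> \<Longrightarrow> norm y \<le> B"
    using compact_imp_bounded bounded_iff by metis
  have m: "\<phi> \<in> borel_measurable borel" using c by (rule borel_measurable_continuous_onI)
  have Om: "\<Omega> \<in> sets borel" using o by simp
  have "(\<lambda>x. indicator \<Omega> x *\<^sub>R \<phi> x) \<in> borel_measurable lborel" using m Om by measurable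
  then have mm: "(\<lambda>x. indicator \<Omega> x *\<^sub>R \<phi> x) \<in> borel_measurable lebesgue" by (rule measurable_completion)
  show "integrable lebesgue (\<lambda>x. indicator \<Omega> x *\<^sub>R \<phi> x)"
  proof (rule integrableI_bounded_set[where A=\<Omega> and B=B])
    show "\<Omega> \<in> sets lebesgue" using o by (rule open_sets_lebesgue)
    show "emeasure lebesgue \<Omega> < \<infinity>" using o b by (rule emeasure_lebesgue_bounded_open)
    show "AE x in lebesgue. x \<in> \<Omega> \<longrightarrow> norm (indicator \<Omega> x *\<^sub>R \<phi> x) \<le> B"
      using B closure_subset by (intro AE_I2) (auto simp: indicator_def)
    show "AE x in lebesgue. x \<notin> \<Omega> \<longrightarrow> indicator \<Omega> x *\<^sub>R \<phi> x = 0" by simp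
  qed (rule mm)
qed




lemma Wh_comp_cont:
  assumes "v \<in> Wh \<Omega> T r" shows "continuous_on UNIV (\<lambda>x. v x $ i)"
  by (rule bounded_linear.continuous_on[OF bounded_linear_vec_nth Wh_cont[OF assms]])

definition Fgr :: "(real^'d::finite \<Rightarrow> real^'d) \<Rightarrow> real^'d \<Rightarrow> real" where
  "Fgr v x = (\<Sum>i\<in>UNIV. \<Sum>j\<in>UNIV. pd (\<lambda>y. v y $ i) j x * pd (\<lambda>y. v y $ i) j x)"

lemma gradip_Fgr: "gradip \<Omega> v v = (LINT x:\<Omega>|lebesgue. Fgr v x)"
  by (simp add: gradip_def Fgr_def)

lemma Fgr_nonneg: "0 \<le> Fgr v x"
  unfolding Fgr_def by (intro sum_nonneg) auto

lemma gradip_integrable: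
  fixes v :: "real^'d::finite \<Rightarrow> real^'d"
  assumes tri: "triangulation \<Omega> T" and v: "v \<in> Wh \<Omega> T r" and b: "bounded \<Omega>" and o: "open \<Omega>"
  shows "set_integrable lebesgue \<Omega> (Fgr v)"
proof -
  have "\<forall>S\<in>T. \<forall>i. \<exists>c. \<forall>x\<in>convex hull S. v x $ i = polyf c r x" using Wh_poly[OF v] by blast
  then obtain cc where cc: "\<And>S i x. S \<in> T \<Longrightarrow> x \<in> convex hull S \<Longrightarrow> v x $ i = polyf (cc S i) r x"
    by metis
  define A where "A = T \<times> (UNIV::'d set) \<times> (UNIV::'d set)"
  define Ks where "Ks = \<Union>((\<lambda>(S,i,j). (\<lambda>x. dpolyf (cc S i) r x (axis j 1)) ` (convex hull S)) ` A)"
  have "finite T" using tri by (simp add: triangulation_def)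
  then have "finite A" by (simp add: A_def)
  moreover have "compact ((\<lambda>x. dpolyf (cc S i) r x (axis j 1)) ` (convex hull S))" if "(S,i,j) \<in> A" for S i j
    by (rule compact_continuous_image[OF dpolyf_continuous tri_compact[OF tri]]) (use that in \<open>auto simp: A_def\<close>)
  ultimately have "compact Ks" unfolding Ks_def by (intro compact_Union) auto
  then obtain M where M: "\<And>y. y \<in> Ks \<Longrightarrow> norm y \<le> M" using compact_imp_bounded bounded_iff by metis
  define G where "G x = indicator \<Omega> x * (\<Sum>i\<in>UNIV. \<Sum>j\<in>UNIV. (pdB (\<lambda>y. v y $ i) j x)^2)" for x
  have Om: "\<Omega> \<in> sets borel" using o by simp
  have pm: "pdB (\<lambda>y. v y $ i) j \<in> borel_measurable borel" for i j
    by (rule pdB_borel[OF Wh_comp_cont[OF v]])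
  have "G \<in> borel_measurable lborel" unfolding G_def using pm Om by measurable
  then have Gm: "G \<in> borel_measurable lebesgue" by (rule measurable_completion)
  have bnd: "\<bar>G x\<bar> \<le> real CARD('d) * (real CARD('d) * M^2)" if x: "x \<in> \<Omega>" "x \<notin> (\<Union>S\<in>T. frontier (convex hull S))" for x
  proof -
    obtain S where S: "S \<in> T" "x \<in> convex hull S" using tri_cover[OF tri] x closure_subset by blast
    have "closed (convex hull S)" by (rule compact_imp_closed[OF tri_compact[OF tri S(1)]])
    then have xi: "x \<in> interior (convex hull S)" using x S by (auto simp: frontier_def)
    have "(pdB (\<lambda>y. v y $ i) j x)^2 \<le> M^2" for i j
    proof -
      have "pdB (\<lambda>y. v y $ i) j x = dpolyf (cc S i) r x (axis j 1)"
        by (rule Wh_interior_pd(1)[OF _ xi]) (use cc S in auto)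
      moreover have "dpolyf (cc S i) r x (axis j 1) \<in> Ks"
      proof -
        have "dpolyf (cc S i) r x (axis j 1) \<in> (\<lambda>(S,i,j). (\<lambda>x. dpolyf (cc S i) r x (axis j 1)) ` (convex hull S)) (S,i,j)"
          using S(2) by simp
        moreover have "(S,i,j) \<in> A" using S(1) by (simp add: A_def)
        ultimately show ?thesis unfolding Ks_def by blast
      qed
      ultimately have "\<bar>pdB (\<lambda>y. v y $ i) j x\<bar> \<le> M" using M by auto
      from power_mono[OF this abs_ge_zero, of 2] show ?thesis by simp
    qed
    then have "(\<Sum>i\<in>UNIV. \<Sum>j\<in>UNIV. (pdB (\<lambda>y. v y $ i) j x)^2) \<le> real CARD('d) * (real CARD('d) * M^2)"
      by (intro sum_bounded_above) (simp add: sum_bounded_above)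
    moreover have "0 \<le> (\<Sum>i\<in>UNIV. \<Sum>j\<in>UNIV. (pdB (\<lambda>y. v y $ i) j x)^2)" by (intro sum_nonneg) auto
    ultimately show ?thesis using x by (simp add: G_def)
  qed
  have Gi: "integrable lebesgue G"
  proof (rule integrableI_bounded_set[where A=\<Omega> and B="real CARD('d) * (real CARD('d) * M^2)"])
    show "\<Omega> \<in> sets lebesgue" using o by (rule open_sets_lebesgue)
    show "emeasure lebesgue \<Omega> < \<infinity>" using o b by (rule emeasure_lebesgue_bounded_open)
    show "AE x in lebesgue. x \<in> \<Omega> \<longrightarrow> norm (G x) \<le> real CARD('d) * (real CARD('d) * M^2)"
      using AE_not_in[OF N_null[OF tri]] by eventually_elim (use bnd in auto)
    show "AE x in lebesgue. x \<notin> \<Omega> \<longrightarrow> G x = 0" by (simp add: G_def)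
  qed (rule Gm)
  have ae: "AE x in lebesgue. G x = indicator \<Omega> x *\<^sub>R Fgr v x"
    using AE_pd[OF tri v] by eventually_elim (simp add: G_def Fgr_def power2_eq_square)
  have "(\<lambda>x. indicator \<Omega> x *\<^sub>R Fgr v x) \<in> borel_measurable lebesgue"
    by (rule borel_measurable_AE[OF Gm ae])
  then show ?thesis unfolding set_integrable_def by (rule integrable_cong_AE_imp[OF Gi _ ae])
qed




lemma nn_set_integral_eq:
  fixes f :: "real^'d::finite \<Rightarrow> real"
  assumes i: "set_integrable lebesgue \<Omega> f" and nn: "\<And>x. 0 \<le> f x"
  shows "ennreal (LINT x:\<Omega>|lebesgue. f x) = (\<integral>\<^sup>+x. indicator \<Omega> x * ennreal (f x) \<partial>lebesgue)"
proof -
  have "(\<integral>\<^sup>+x. ennreal (indicator \<Omega> x *\<^sub>R f x) \<partial>lebesgue) = ennreal (integral\<^sup>L lebesgue (\<lambda>x. indicator \<Omega> x *\<^sub>R f x))"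
    by (rule nn_integral_eq_integral) (use i nn in \<open>auto simp: set_integrable_def\<close>)
  moreover have "(\<lambda>x. ennreal (indicator \<Omega> x *\<^sub>R f x)) = (\<lambda>x. indicator \<Omega> x * ennreal (f x))"
    by (auto simp: indicator_def fun_eq_iff)
  ultimately show ?thesis by (simp add: set_lebesgue_integral_def)
qed

lemma poinc_Wh:
  fixes \<Omega> :: "(real^'d::finite) set"
  assumes tri: "triangulation \<Omega> T" and o: "open \<Omega>" and b: "bounded \<Omega>"
  shows "\<exists>CP>0. \<forall>v\<in>Wh \<Omega> T r. L2ip \<Omega> v v \<le> CP * gradip \<Omega> v v"
proof -
  obtain R where R: "R > 0" "\<Omega> \<subseteq> ball 0 R" using bounded_subset_ballD[OF b] by blast
  define j0 :: 'd where "j0 = undefined"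
  define c where "c = ennreal (4*R^2)"
  have "L2ip \<Omega> v v \<le> (4*R^2) * gradip \<Omega> v v" if v: "v \<in> Wh \<Omega> T r" for v
  proof -
    have vc: "continuous_on UNIV v" by (rule Wh_cont[OF v])
    have Om: "\<Omega> \<in> sets borel" using o by simp
    have pm: "pdB (\<lambda>y. v y $ i) j \<in> borel_measurable borel" for i j
      by (rule pdB_borel[OF Wh_comp_cont[OF v]])
    have cm: "(\<lambda>x. v x $ i) \<in> borel_measurable borel" for i
      by (rule borel_measurable_continuous_onI[OF Wh_comp_cont[OF v]])
    have G0: "0 \<le> gradip \<Omega> v v" unfolding gradip_Fgr set_lebesgue_integral_def
      by (intro integral_nonneg_AE AE_I2) (simp add: Fgr_nonneg)
    have gr: "ennreal (gradip \<Omega> v v) = (\<integral>\<^sup>+x. indicator \<Omega> x * ennreal (Fgr v x) \<partial>lebesgue)"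
      unfolding gradip_Fgr by (rule nn_set_integral_eq[OF gradip_integrable[OF tri v b o] Fgr_nonneg])
    have vi: "set_integrable lebesgue \<Omega> (\<lambda>x. v x \<bullet> v x)"
      by (rule cont_set_integrable[OF _ b o]) (intro continuous_intros vc)
    have "ennreal (L2ip \<Omega> v v) = (\<integral>\<^sup>+x. indicator \<Omega> x * ennreal (v x \<bullet> v x) \<partial>lebesgue)"
      unfolding L2ip_def by (rule nn_set_integral_eq[OF vi]) simp
    also have "\<dots> \<le> (\<integral>\<^sup>+x. ennreal (v x \<bullet> v x) \<partial>lebesgue)"
      by (rule nn_integral_mono) (auto simp: indicator_def)
    also have "\<dots> = (\<integral>\<^sup>+x. ennreal (v x \<bullet> v x) \<partial>lborel)"
      by (rule nn_integral_completion)
    also have "\<dots> = (\<integral>\<^sup>+x. (\<Sum>i\<in>UNIV. ennreal ((v x $ i)^2)) \<partial>lborel)"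
      by (rule nn_integral_cong) (simp add: inner_vec_def sum_ennreal power2_eq_square)
    also have "\<dots> = (\<Sum>i\<in>UNIV. (\<integral>\<^sup>+x. ennreal ((v x $ i)^2) \<partial>lborel))"
      by (rule nn_integral_sum) (use cm in measurable)
    also have "\<dots> \<le> (\<Sum>i\<in>UNIV. c * (\<integral>\<^sup>+x. indicator \<Omega> x * ennreal ((pdB (\<lambda>y. v y $ i) j0 x)^2) \<partial>lborel))"
    proof (rule sum_mono)
      fix i
      show "(\<integral>\<^sup>+x. ennreal ((v x $ i)^2) \<partial>lborel) \<le> c * (\<integral>\<^sup>+x. indicator \<Omega> x * ennreal ((pdB (\<lambda>y. v y $ i) j0 x)^2) \<partial>lborel)"
        unfolding c_def
      proof (rule poinc_scalar[OF R(1) o R(2) Wh_comp_cont[OF v]])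
        show "v x $ i = 0" if "x \<notin> \<Omega>" for x using Wh_zero[OF v that] by simp
        show "\<exists>K. finite K \<and> (\<forall>t. t \<notin> K \<longrightarrow> (\<exists>D. ((\<lambda>s. v (x0 + s *\<^sub>R axis j0 1) $ i) has_real_derivative D) (at t)))" for x0
          by (rule Wh_line[OF tri v])
      qed
    qed
    also have "\<dots> = c * (\<integral>\<^sup>+x. (\<Sum>i\<in>UNIV. indicator \<Omega> x * ennreal ((pdB (\<lambda>y. v y $ i) j0 x)^2)) \<partial>lborel)"
      by (subst nn_integral_sum) (use pm Om in \<open>measurable, simp add: sum_distrib_left\<close>)
    also have "\<dots> \<le> c * (\<integral>\<^sup>+x. indicator \<Omega> x * ennreal (\<Sum>i\<in>UNIV. \<Sum>j\<in>UNIV. (pdB (\<lambda>y. v y $ i) j x)^2) \<partial>lborel)"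
    proof (intro mult_left_mono nn_integral_mono)
      fix x
      have "(\<Sum>i\<in>UNIV. indicator \<Omega> x * ennreal ((pdB (\<lambda>y. v y $ i) j0 x)^2))
          = indicator \<Omega> x * ennreal (\<Sum>i\<in>UNIV. (pdB (\<lambda>y. v y $ i) j0 x)^2)"
        by (simp add: sum_distrib_left[symmetric] sum_ennreal)
      also have "\<dots> \<le> indicator \<Omega> x * ennreal (\<Sum>i\<in>UNIV. \<Sum>j\<in>UNIV. (pdB (\<lambda>y. v y $ i) j x)^2)"
      proof (intro mult_left_mono ennreal_leI sum_mono)
        fix i
        show "(pdB (\<lambda>y. v y $ i) j0 x)^2 \<le> (\<Sum>j\<in>UNIV. (pdB (\<lambda>y. v y $ i) j x)^2)"
          by (rule member_le_sum) auto
      qed auto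
      finally show "(\<Sum>i\<in>UNIV. indicator \<Omega> x * ennreal ((pdB (\<lambda>y. v y $ i) j0 x)^2))
          \<le> indicator \<Omega> x * ennreal (\<Sum>i\<in>UNIV. \<Sum>j\<in>UNIV. (pdB (\<lambda>y. v y $ i) j x)^2)" .
    qed auto
    also have "(\<integral>\<^sup>+x. indicator \<Omega> x * ennreal (\<Sum>i\<in>UNIV. \<Sum>j\<in>UNIV. (pdB (\<lambda>y. v y $ i) j x)^2) \<partial>lborel)
        = (\<integral>\<^sup>+x. indicator \<Omega> x * ennreal (\<Sum>i\<in>UNIV. \<Sum>j\<in>UNIV. (pdB (\<lambda>y. v y $ i) j x)^2) \<partial>lebesgue)"
      by (rule nn_integral_completion[symmetric])
    also have "\<dots> = (\<integral>\<^sup>+x. indicator \<Omega> x * ennreal (Fgr v x) \<partial>lebesgue)"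
      by (rule nn_integral_cong_AE) (use AE_pd[OF tri v] in \<open>eventually_elim, simp add: Fgr_def power2_eq_square\<close>)
    also have "c * \<dots> = ennreal (4*R^2 * gradip \<Omega> v v)"
      unfolding gr[symmetric] c_def by (rule ennreal_mult[symmetric]) (use G0 in auto)
    finally show ?thesis using G0 by (simp add: ennreal_le_iff)
  qed
  then show ?thesis using R(1) by (intro exI[of _ "4*R^2"]) auto
qed




lemma meas_pos:
  fixes \<Omega> :: "('a::euclidean_space) set"
  assumes o: "open \<Omega>" and b: "bounded \<Omega>" and ne: "\<Omega> \<noteq> {}"
  shows "measure lebesgue \<Omega> > 0"
proof (rule ccontr)
  assume "\<not> measure lebesgue \<Omega> > 0"
  then have m0: "measure lebesgue \<Omega> = 0" using measure_nonneg[of lebesgue \<Omega>] by linarith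
  have "emeasure lebesgue \<Omega> \<noteq> top" using emeasure_lebesgue_bounded_open[OF o b] by simp
  then have "emeasure lebesgue \<Omega> = ennreal (measure lebesgue \<Omega>)" by (rule emeasure_eq_ennreal_measure)
  then have "emeasure lebesgue \<Omega> = 0" using m0 by simp
  then have "\<Omega> \<in> null_sets lebesgue" using open_sets_lebesgue[OF o] by auto
  then have "negligible \<Omega>" by (simp add: negligible_iff_null_sets)
  with open_not_negligible[OF o ne] show False by simp
qed

lemma inner_young:
  fixes f v :: "'a::real_inner" and a :: real
  assumes a: "a > 0"
  shows "2 * (f \<bullet> v) \<le> a * (v \<bullet> v) + (1/a) * (f \<bullet> f)"
proof -
  have "0 \<le> (a *\<^sub>R v - f) \<bullet> (a *\<^sub>R v - f)" by simp
  also have "\<dots> = a * a * (v \<bullet> v) - 2 * a * (f \<bullet> v) + f \<bullet> f"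
    by (simp add: inner_diff_left inner_diff_right inner_commute algebra_simps)
  finally have "a * (2 * (f \<bullet> v)) \<le> a * (a * (v \<bullet> v) + (1/a) * (f \<bullet> f))"
    using a by (simp add: algebra_simps)
  then show ?thesis using a by (simp add: mult_le_cancel_left_pos)
qed

lemma inner_abs_bound:
  fixes f v :: "'a::real_inner"
  shows "\<bar>f \<bullet> v\<bar> \<le> f \<bullet> f + v \<bullet> v"
proof -
  have "\<bar>f \<bullet> v\<bar> \<le> norm f * norm v" by (rule Cauchy_Schwarz_ineq2)
  also have "\<dots> \<le> (norm f)^2 + (norm v)^2"
  proof -
    have "0 \<le> (norm f - norm v)^2" by simp
    then have "2 * (norm f * norm v) \<le> (norm f)^2 + (norm v)^2" by (simp add: power2_eq_square algebra_simps)
    moreover have "0 \<le> norm f * norm v" by simp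
    ultimately show ?thesis by linarith
  qed
  finally show ?thesis by (simp add: power2_norm_eq_inner)
qed

lemma telescope:
  fixes a X D E :: "nat \<Rightarrow> real" and d :: real
  assumes "\<And>n. n < N \<Longrightarrow> a (Suc n) + d * X n + D n \<le> E n + a n"
  shows "a N + d * (\<Sum>n<N. X n) + (\<Sum>n<N. D n) \<le> (\<Sum>n<N. E n) + a 0"
  using assms
proof (induction N)
  case 0 then show ?case by simp
next
  case (Suc N)
  have "a N + d * (\<Sum>n<N. X n) + (\<Sum>n<N. D n) \<le> (\<Sum>n<N. E n) + a 0" using Suc by auto
  moreover have "a (Suc N) + d * X N + D N \<le> E N + a N" using Suc by auto
  ultimately show ?case by (simp add: distrib_left)
qed

lemma final_lin:
  fixes A1 A0 Dd T1 T2 T3 Fd FFd M1 M0 :: real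
  assumes "A1 - A0 + Dd + 2 * T1 + 2 * T2 = 2 * Fd" "2 * M1 - 2 * M0 + T3 = 2 * T2" "2 * Fd \<le> T1 + FFd"
  shows "A1 + 2 * M1 + (T1 + T3) + Dd \<le> FFd + A0 + 2 * M0"
  using assms by linarith

lemma energy_step:
  fixes \<Omega> :: "(real^'d::finite) set" and v0 v1 f1 :: "real^'d \<Rightarrow> real^'d" and q1 :: "real^'d \<Rightarrow> real"
  assumes tri: "triangulation \<Omega> T" and o: "open \<Omega>" and b: "bounded \<Omega>" and ne: "\<Omega> \<noteq> {}"
    and nu: "\<nu> > 0" and tau: "\<tau> > 0" and dt: "\<Delta>t > 0" and CP: "CP > 0"
    and PC: "\<And>v. v \<in> Wh \<Omega> T r \<Longrightarrow> L2ip \<Omega> v v \<le> CP * gradip \<Omega> v v"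
    and v0: "v0 \<in> Wh \<Omega> T r" and v1: "v1 \<in> Wh \<Omega> T r" and fL: "L2field \<Omega> f1"
    and eqv: "L2ip \<Omega> (\<lambda>x. inverse \<Delta>t *\<^sub>R (v1 x - v0 x)) v1 + (\<nu> + \<mu> * \<tau> * k0) * gradip \<Omega> v1 v1
        + btri \<Omega> v0 v1 v1 - L2ips \<Omega> (divg v1) q1 = L2ip \<Omega> f1 v1"
    and dv: "L2ips \<Omega> (divg v1) q1 = 0"
    and keq: "(k1 - k0) / \<Delta>t + sqrt 2 / 2 * inverse \<tau> * k1
        = 1 / measure lebesgue \<Omega> * (LINT x:\<Omega>|lebesgue. \<mu> * \<tau> * k0 * gradsq v1 x)"
  shows "L2ip \<Omega> v1 v1 + 2 * measure lebesgue \<Omega> * k1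
      + \<Delta>t * (\<nu> * gradip \<Omega> v1 v1 + sqrt 2 * inverse \<tau> * measure lebesgue \<Omega> * k1)
      + L2ip \<Omega> (v1 - v0) (v1 - v0)
      \<le> CP / \<nu> * \<Delta>t * L2ip \<Omega> f1 f1 + L2ip \<Omega> v0 v0 + 2 * measure lebesgue \<Omega> * k0"
proof -
  define m where "m = measure lebesgue \<Omega>"
  define G where "G = gradip \<Omega> v1 v1"
  define A1 where "A1 = L2ip \<Omega> v1 v1"
  define A0 where "A0 = L2ip \<Omega> v0 v0"
  define Dd where "Dd = L2ip \<Omega> (v1 - v0) (v1 - v0)"
  define Fv where "Fv = L2ip \<Omega> f1 v1"
  define FF where "FF = L2ip \<Omega> f1 f1"
  have mpos: "m > 0" unfolding m_def by (rule meas_pos[OF o b ne])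
  have vc0: "continuous_on UNIV v0" by (rule Wh_cont[OF v0])
  have vc1: "continuous_on UNIV v1" by (rule Wh_cont[OF v1])
  have i11: "set_integrable lebesgue \<Omega> (\<lambda>x. v1 x \<bullet> v1 x)"
    by (rule cont_set_integrable[OF _ b o]) (intro continuous_intros vc1)
  have i00: "set_integrable lebesgue \<Omega> (\<lambda>x. v0 x \<bullet> v0 x)"
    by (rule cont_set_integrable[OF _ b o]) (intro continuous_intros vc0)
  have idd: "set_integrable lebesgue \<Omega> (\<lambda>x. (v1 x - v0 x) \<bullet> (v1 x - v0 x))"
    by (rule cont_set_integrable[OF _ b o]) (intro continuous_intros vc0 vc1)
  have Dd_eq: "Dd = (LINT x:\<Omega>|lebesgue. (v1 x - v0 x) \<bullet> (v1 x - v0 x))"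
    by (simp add: Dd_def L2ip_def fun_diff_def)
  have pw: "(v1 x - v0 x) \<bullet> v1 x = 1/2 * (v1 x \<bullet> v1 x) - 1/2 * (v0 x \<bullet> v0 x) + 1/2 * ((v1 x - v0 x) \<bullet> (v1 x - v0 x))" for x
    by (simp add: inner_diff_left inner_diff_right inner_commute algebra_simps)
  have "(LINT x:\<Omega>|lebesgue. (v1 x - v0 x) \<bullet> v1 x)
      = (LINT x:\<Omega>|lebesgue. 1/2 * (v1 x \<bullet> v1 x) - 1/2 * (v0 x \<bullet> v0 x) + 1/2 * ((v1 x - v0 x) \<bullet> (v1 x - v0 x)))"
    by (simp only: pw)
  also have "\<dots> = 1/2 * A1 - 1/2 * A0 + 1/2 * Dd"
    using i11 i00 idd by (simp add: A1_def A0_def Dd_eq L2ip_def)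
  finally have L1': "(LINT x:\<Omega>|lebesgue. (v1 x - v0 x) \<bullet> v1 x) = 1/2 * A1 - 1/2 * A0 + 1/2 * Dd" .
  have L1: "L2ip \<Omega> (\<lambda>x. inverse \<Delta>t *\<^sub>R (v1 x - v0 x)) v1 = inverse \<Delta>t * (1/2 * A1 - 1/2 * A0 + 1/2 * Dd)"
    unfolding L2ip_def L1'[symmetric] by simp
  have bz: "btri \<Omega> v0 v1 v1 = 0" by (simp add: btri_def)
  have gs: "gradsq v1 x = Fgr v1 x" for x by (simp add: gradsq_def Fgr_def power2_eq_square)
  have kint: "(LINT x:\<Omega>|lebesgue. \<mu> * \<tau> * k0 * gradsq v1 x) = \<mu> * \<tau> * k0 * G"
    by (simp add: gs G_def gradip_Fgr)
  have E1: "inverse \<Delta>t * (1/2 * A1 - 1/2 * A0 + 1/2 * Dd) + (\<nu> + \<mu> * \<tau> * k0) * G = Fv"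
    using eqv unfolding L1 bz dv by (simp add: G_def Fv_def)
  have E1': "A1 - A0 + Dd + 2 * \<Delta>t * (\<nu> + \<mu> * \<tau> * k0) * G = 2 * \<Delta>t * Fv"
  proof -
    have "inverse \<Delta>t * (1/2 * A1 - 1/2 * A0 + 1/2 * Dd) = Fv - (\<nu> + \<mu> * \<tau> * k0) * G"
      using E1 by simp
    moreover have gen: "\<And>X Y. inverse \<Delta>t * X = Y \<Longrightarrow> X = \<Delta>t * Y" using dt by (auto simp: field_simps)
    ultimately have e: "1/2 * A1 - 1/2 * A0 + 1/2 * Dd = \<Delta>t * (Fv - (\<nu> + \<mu> * \<tau> * k0) * G)"
      by blast
    show ?thesis using e by (simp add: algebra_simps)
  qed
  have E2: "(k1 - k0) / \<Delta>t + sqrt 2 / 2 * inverse \<tau> * k1 = 1 / m * (\<mu> * \<tau> * k0 * G)"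
    using keq kint by (simp add: m_def)
  have E2': "2 * m * (k1 - k0) + sqrt 2 * inverse \<tau> * m * \<Delta>t * k1 = 2 * \<Delta>t * (\<mu> * \<tau> * k0 * G)"
  proof -
    define W where "W = \<mu> * \<tau> * k0 * G"
    define c where "c = sqrt 2 / 2 * inverse \<tau>"
    have "(k1 - k0) / \<Delta>t = 1 / m * W - c * k1" using E2 by (simp add: W_def c_def)
    moreover have gen: "\<And>X Y. X / \<Delta>t = Y \<Longrightarrow> X = \<Delta>t * Y" using dt by (auto simp: field_simps)
    ultimately have "k1 - k0 = \<Delta>t * (1 / m * W - c * k1)" by blast
    then have "2 * m * (k1 - k0) = 2 * m * (\<Delta>t * (1 / m * W - c * k1))" by simp
    also have "\<dots> = 2 * \<Delta>t * W - 2 * m * \<Delta>t * c * k1" using mpos by (simp add: field_simps)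
    also have "2 * m * \<Delta>t * c * k1 = sqrt 2 * inverse \<tau> * m * \<Delta>t * k1" by (simp add: c_def)
    finally show ?thesis by (simp add: W_def)
  qed
  define a where "a = \<nu> / CP"
  have apos: "a > 0" using nu CP by (simp add: a_def)
  have fm: "f1 \<in> borel_measurable lebesgue" using fL by (simp add: L2field_def)
  have ff: "set_integrable lebesgue \<Omega> (\<lambda>x. f1 x \<bullet> f1 x)"
    using fL by (simp add: L2field_def power2_norm_eq_inner)
  have Om: "\<Omega> \<in> sets borel" using o by simp
  have "v1 \<in> borel_measurable lborel"
    using borel_measurable_continuous_onI[OF vc1] by simp
  then have vm: "v1 \<in> borel_measurable lebesgue" by (rule measurable_completion)
  have OmL: "\<Omega> \<in> sets lebesgue" by (rule open_sets_lebesgue[OF o])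
  have fv: "set_integrable lebesgue \<Omega> (\<lambda>x. f1 x \<bullet> v1 x)"
    unfolding set_integrable_def
  proof (rule Bochner_Integration.integrable_bound)
    show "integrable lebesgue (\<lambda>x. indicator \<Omega> x *\<^sub>R (f1 x \<bullet> f1 x + v1 x \<bullet> v1 x))"
      using set_integral_add(1)[OF ff i11] by (simp add: set_integrable_def)
    show "(\<lambda>x. indicator \<Omega> x *\<^sub>R (f1 x \<bullet> v1 x)) \<in> borel_measurable lebesgue"
      using fm vm OmL by measurable
    show "AE x in lebesgue. norm (indicator \<Omega> x *\<^sub>R (f1 x \<bullet> v1 x)) \<le> norm (indicator \<Omega> x *\<^sub>R (f1 x \<bullet> f1 x + v1 x \<bullet> v1 x))"
    proof (rule AE_I2)
      fix x
      have "\<bar>f1 x \<bullet> v1 x\<bar> \<le> \<bar>f1 x \<bullet> f1 x + v1 x \<bullet> v1 x\<bar>"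
        using inner_abs_bound[of "f1 x" "v1 x"] by simp
      then show "norm (indicator \<Omega> x *\<^sub>R (f1 x \<bullet> v1 x)) \<le> norm (indicator \<Omega> x *\<^sub>R (f1 x \<bullet> f1 x + v1 x \<bullet> v1 x))"
        by (simp add: indicator_def)
    qed
  qed
  have "(LINT x:\<Omega>|lebesgue. 2 * (f1 x \<bullet> v1 x)) \<le> (LINT x:\<Omega>|lebesgue. a * (v1 x \<bullet> v1 x) + (1/a) * (f1 x \<bullet> f1 x))"
    by (rule set_integral_mono) (use fv i11 ff apos inner_young in auto)
  then have Y0: "2 * Fv \<le> a * A1 + (1/a) * FF"
    using i11 ff by (simp add: Fv_def A1_def FF_def L2ip_def)
  have "A1 \<le> CP * G" using PC[OF v1] by (simp add: A1_def G_def)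
  then have "a * A1 \<le> \<nu> * G" using apos CP by (simp add: a_def field_simps)
  moreover have ia: "1/a = CP / \<nu>" by (simp add: a_def)
  moreover from Y0 have "2 * Fv \<le> a * A1 + CP / \<nu> * FF" by (simp only: ia)
  ultimately have Y: "2 * Fv \<le> \<nu> * G + CP / \<nu> * FF" by linarith
  have Y': "2 * \<Delta>t * Fv \<le> \<Delta>t * (\<nu> * G) + CP / \<nu> * \<Delta>t * FF"
  proof -
    have "\<Delta>t * (2 * Fv) \<le> \<Delta>t * (\<nu> * G + CP / \<nu> * FF)" using Y dt by (intro mult_left_mono) auto
    then show ?thesis by (simp add: algebra_simps)
  qed
  have h1: "A1 - A0 + Dd + 2 * (\<Delta>t * (\<nu> * G)) + 2 * (\<Delta>t * (\<mu> * \<tau> * k0 * G)) = 2 * (\<Delta>t * Fv)"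
    using E1' by (simp add: algebra_simps)
  have h2: "2 * (m * k1) - 2 * (m * k0) + sqrt 2 * inverse \<tau> * m * \<Delta>t * k1 = 2 * (\<Delta>t * (\<mu> * \<tau> * k0 * G))"
    using E2' by (simp add: algebra_simps)
  have h3: "2 * (\<Delta>t * Fv) \<le> \<Delta>t * (\<nu> * G) + CP / \<nu> * \<Delta>t * FF"
    using Y' by (simp add: algebra_simps)
  have fin: "A1 + 2 * (m * k1) + (\<Delta>t * (\<nu> * G) + sqrt 2 * inverse \<tau> * m * \<Delta>t * k1) + Dd
      \<le> CP / \<nu> * \<Delta>t * FF + A0 + 2 * (m * k0)"
    by (rule final_lin[OF h1 h2 h3])
  have eqL: "A1 + 2 * m * k1 + \<Delta>t * (\<nu> * G + sqrt 2 * inverse \<tau> * m * k1) + Dd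
      = A1 + 2 * (m * k1) + (\<Delta>t * (\<nu> * G) + sqrt 2 * inverse \<tau> * m * \<Delta>t * k1) + Dd"
    by (simp add: algebra_simps)
  have eqR: "CP / \<nu> * \<Delta>t * FF + A0 + 2 * m * k0 = CP / \<nu> * \<Delta>t * FF + A0 + 2 * (m * k0)"
    by (simp add: algebra_simps)
  have "A1 + 2 * m * k1 + \<Delta>t * (\<nu> * G + sqrt 2 * inverse \<tau> * m * k1) + Dd \<le> CP / \<nu> * \<Delta>t * FF + A0 + 2 * m * k0"
    unfolding eqL eqR by (rule fin)
  then show ?thesis by (simp only: m_def G_def A1_def A0_def Dd_def FF_def)
qed




theorem theorem5p1:
  fixes \<Omega> :: "(real^'d) set" and T :: "(real^'d) set set" and r :: nat
    and \<nu> \<mu> \<tau> :: real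
  assumes dim: "CARD('d) = 2 \<or> CARD('d) = 3"
    and dom: "open \<Omega>" "bounded \<Omega>" "connected \<Omega>" "\<Omega> \<noteq> {}"
    and tri: "triangulation \<Omega> T"
    and deg: "r \<ge> 2"
    and infsup: "inf_sup \<Omega> (Wh \<Omega> T r) (Qh \<Omega> T r)"
    and par: "\<nu> > 0" "\<mu> > 0" "\<tau> > 0"
  shows "\<exists>C. \<forall>(\<Delta>t::real) (N::nat) (v :: nat \<Rightarrow> real^'d \<Rightarrow> real^'d)
             (q :: nat \<Rightarrow> real^'d \<Rightarrow> real) (k :: nat \<Rightarrow> real)
             (f :: real \<Rightarrow> real^'d \<Rightarrow> real^'d).
     \<Delta>t > 0 \<and>
     (\<forall>n\<le>N. v n \<in> Wh \<Omega> T r) \<and>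
     (\<forall>n<N. q (Suc n) \<in> Qh \<Omega> T r) \<and>
     (\<forall>n<N. L2field \<Omega> (f (real (Suc n) * \<Delta>t))) \<and>
     (\<forall>n<N. \<forall>w\<in>Wh \<Omega> T r.
        L2ip \<Omega> (\<lambda>x. inverse \<Delta>t *\<^sub>R (v (Suc n) x - v n x)) w
        + (\<nu> + \<mu> * \<tau> * k n) * gradip \<Omega> (v (Suc n)) w
        + btri \<Omega> (v n) (v (Suc n)) w
        - L2ips \<Omega> (divg w) (q (Suc n))
        = L2ip \<Omega> (f (real (Suc n) * \<Delta>t)) w) \<and>
     (\<forall>n<N. \<forall>p\<in>Qh \<Omega> T r. L2ips \<Omega> (divg (v (Suc n))) p = 0) \<and>
     (\<forall>n<N. (k (Suc n) - k n) / \<Delta>t + sqrt 2 / 2 * inverse \<tau> * k (Suc n)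
        = 1 / measure lebesgue \<Omega> *
          (LINT x:\<Omega>|lebesgue. \<mu> * \<tau> * k n * gradsq (v (Suc n)) x))
     \<longrightarrow>
     L2ip \<Omega> (v N) (v N) + 2 * measure lebesgue \<Omega> * k N
     + \<Delta>t * (\<Sum>n<N. \<nu> * gradip \<Omega> (v (Suc n)) (v (Suc n))
                 + sqrt 2 * inverse \<tau> * measure lebesgue \<Omega> * k (Suc n))
     + (\<Sum>n<N. L2ip \<Omega> (v (Suc n) - v n) (v (Suc n) - v n))
     \<le> (\<Sum>n<N. C * \<Delta>t * L2ip \<Omega> (f (real (Suc n) * \<Delta>t)) (f (real (Suc n) * \<Delta>t)))
       + L2ip \<Omega> (v 0) (v 0) + 2 * measure lebesgue \<Omega> * k 0"
proof -
  obtain CP where CP: "CP > 0" "\<forall>v\<in>Wh \<Omega> T r. L2ip \<Omega> v v \<le> CP * gradip \<Omega> v v"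
    using poinc_Wh[OF tri dom(1) dom(2)] by blast
  show ?thesis
  proof (rule exI[of _ "CP / \<nu>"], intro allI impI)
    fix \<Delta>t :: real and N :: nat and v :: "nat \<Rightarrow> real^'d \<Rightarrow> real^'d" and q :: "nat \<Rightarrow> real^'d \<Rightarrow> real"
      and k :: "nat \<Rightarrow> real" and f :: "real \<Rightarrow> real^'d \<Rightarrow> real^'d"
    assume H: "\<Delta>t > 0 \<and>
     (\<forall>n\<le>N. v n \<in> Wh \<Omega> T r) \<and>
     (\<forall>n<N. q (Suc n) \<in> Qh \<Omega> T r) \<and>
     (\<forall>n<N. L2field \<Omega> (f (real (Suc n) * \<Delta>t))) \<and>
     (\<forall>n<N. \<forall>w\<in>Wh \<Omega> T r.
        L2ip \<Omega> (\<lambda>x. inverse \<Delta>t *\<^sub>R (v (Suc n) x - v n x)) w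
        + (\<nu> + \<mu> * \<tau> * k n) * gradip \<Omega> (v (Suc n)) w
        + btri \<Omega> (v n) (v (Suc n)) w
        - L2ips \<Omega> (divg w) (q (Suc n))
        = L2ip \<Omega> (f (real (Suc n) * \<Delta>t)) w) \<and>
     (\<forall>n<N. \<forall>p\<in>Qh \<Omega> T r. L2ips \<Omega> (divg (v (Suc n))) p = 0) \<and>
     (\<forall>n<N. (k (Suc n) - k n) / \<Delta>t + sqrt 2 / 2 * inverse \<tau> * k (Suc n)
        = 1 / measure lebesgue \<Omega> *
          (LINT x:\<Omega>|lebesgue. \<mu> * \<tau> * k n * gradsq (v (Suc n)) x))"
    define m where "m = measure lebesgue \<Omega>"
    define a where "a n = L2ip \<Omega> (v n) (v n) + 2 * m * k n" for n
    define X where "X n = \<nu> * gradip \<Omega> (v (Suc n)) (v (Suc n)) + sqrt 2 * inverse \<tau> * m * k (Suc n)" for n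
    define D where "D n = L2ip \<Omega> (v (Suc n) - v n) (v (Suc n) - v n)" for n
    define E where "E n = CP / \<nu> * \<Delta>t * L2ip \<Omega> (f (real (Suc n) * \<Delta>t)) (f (real (Suc n) * \<Delta>t))" for n
    have step: "a (Suc n) + \<Delta>t * X n + D n \<le> E n + a n" if n: "n < N" for n
    proof -
      have v1: "v (Suc n) \<in> Wh \<Omega> T r" and v0: "v n \<in> Wh \<Omega> T r" using H n by auto
      have "L2ip \<Omega> (v (Suc n)) (v (Suc n)) + 2 * measure lebesgue \<Omega> * k (Suc n)
        + \<Delta>t * (\<nu> * gradip \<Omega> (v (Suc n)) (v (Suc n)) + sqrt 2 * inverse \<tau> * measure lebesgue \<Omega> * k (Suc n))
        + L2ip \<Omega> (v (Suc n) - v n) (v (Suc n) - v n)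
        \<le> CP / \<nu> * \<Delta>t * L2ip \<Omega> (f (real (Suc n) * \<Delta>t)) (f (real (Suc n) * \<Delta>t))
          + L2ip \<Omega> (v n) (v n) + 2 * measure lebesgue \<Omega> * k n"
      proof (rule energy_step[OF tri dom(1) dom(2) dom(4) par(1) par(3) _ CP(1) _ v0 v1])
        show "\<Delta>t > 0" using H by simp
        show "\<And>w. w \<in> Wh \<Omega> T r \<Longrightarrow> L2ip \<Omega> w w \<le> CP * gradip \<Omega> w w" using CP(2) by blast
        show "L2field \<Omega> (f (real (Suc n) * \<Delta>t))" using H n by blast
        show "L2ip \<Omega> (\<lambda>x. inverse \<Delta>t *\<^sub>R (v (Suc n) x - v n x)) (v (Suc n))
          + (\<nu> + \<mu> * \<tau> * k n) * gradip \<Omega> (v (Suc n)) (v (Suc n))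
          + btri \<Omega> (v n) (v (Suc n)) (v (Suc n)) - L2ips \<Omega> (divg (v (Suc n))) (q (Suc n))
          = L2ip \<Omega> (f (real (Suc n) * \<Delta>t)) (v (Suc n))" using H n v1 by blast
        show "L2ips \<Omega> (divg (v (Suc n))) (q (Suc n)) = 0" using H n by blast
        show "(k (Suc n) - k n) / \<Delta>t + sqrt 2 / 2 * inverse \<tau> * k (Suc n)
          = 1 / measure lebesgue \<Omega> * (LINT x:\<Omega>|lebesgue. \<mu> * \<tau> * k n * gradsq (v (Suc n)) x)"
          using H n by blast
      qed
      then show ?thesis by (simp add: a_def X_def D_def E_def m_def add.assoc)
    qed
    have "a N + \<Delta>t * (\<Sum>n<N. X n) + (\<Sum>n<N. D n) \<le> (\<Sum>n<N. E n) + a 0"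
      by (rule telescope) (rule step)
    then show "L2ip \<Omega> (v N) (v N) + 2 * measure lebesgue \<Omega> * k N
     + \<Delta>t * (\<Sum>n<N. \<nu> * gradip \<Omega> (v (Suc n)) (v (Suc n))
                 + sqrt 2 * inverse \<tau> * measure lebesgue \<Omega> * k (Suc n))
     + (\<Sum>n<N. L2ip \<Omega> (v (Suc n) - v n) (v (Suc n) - v n))
     \<le> (\<Sum>n<N. CP / \<nu> * \<Delta>t * L2ip \<Omega> (f (real (Suc n) * \<Delta>t)) (f (real (Suc n) * \<Delta>t)))
       + L2ip \<Omega> (v 0) (v 0) + 2 * measure lebesgue \<Omega> * k 0"
      by (simp add: a_def X_def D_def E_def m_def add.assoc)
  qed
qed


end
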